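(* Let $q=p^e$ with $p>3$ prime and $e\ge1$, and let $n\ge 1$ be an integer. If $D_{n,3}(1,x)$ is a permutation polynomial of $\mathbb{F}_q$, then $n\equiv 2\pmod 6$.
   Context: For $n\ge 1$ and $a\in\mathbb{F}_q$, $D_{n,3}(a,x)=\sum_{i=0}^{\lfloor n/2\rfloor}\frac{n-3i}{n-i}\binom{n-i}{i}(-x)^i a^{n-2i}\in\mathbb{F}_q[x]$, where each coefficient $\frac{n-3i}{n-i}\binom{n-i}{i}$ is an integer read modulo $p$; and $D_{0,3}(a,x)=-1$. A polynomial $g\in\mathbb{F}_q[x]$ is a permutation polynomial of $\mathbb{F}_q$ if $c\mapsto g(c)$ is a bijection $\mathbb{F}_q\to\mathbb{F}_q$. *)

theory Defs
  imports "HOL-Computational_Algebra.Computational_Algebra"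
begin

text \<open>Integer coefficient (n-3i)/(n-i) * binom(n-i,i); the division is exact for i \<le> n/2, n \<ge> 1.\<close>
definition D3_coeff :: "nat \<Rightarrow> nat \<Rightarrow> int" where
  "D3_coeff n i = ((int n - 3 * int i) * int ((n - i) choose i)) div int (n - i)"

definition D3 :: "nat \<Rightarrow> 'a::comm_ring_1 \<Rightarrow> 'a poly" where
  "D3 n a = (if n = 0 then - 1 else
     (\<Sum>i\<in>{0..n div 2}. monom (of_int (D3_coeff n i) * (- 1) ^ i * a ^ (n - 2 * i)) i))"

definition permutation_poly :: "'a::comm_ring_1 poly \<Rightarrow> bool" where
  "permutation_poly g \<longleftrightarrow> bij (poly g)"

end

theory Submission
  imports Defs "HOL-Number_Theory.Residues"
begin

definition cc :: "nat \<Rightarrow> nat \<Rightarrow> int" where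
  "cc n i = (if i = 0 then 1 else int ((n-i) choose i) - 2 * int ((n-i-1) choose (i-1)))"

definition G :: "nat \<Rightarrow> int \<Rightarrow> int" where
  "G n y = (\<Sum>i\<le>n. cc n i * y^i)"

lemma coeff_eq:
  assumes "n \<ge> 1" "2*i \<le> n"
  shows "D3_coeff n i = cc n i"
proof (cases "i = 0")
  case True
  then show ?thesis using assms by (simp add: D3_coeff_def cc_def)
next
  case False
  define m where "m = n - i"
  have mi: "m \<ge> i" "m > 0" using assms False by (auto simp: m_def)
  have key: "i * (m choose i) = m * ((m - 1) choose (i - 1))"
    using times_binomial_minus1_eq[of i m] False by simp
  have key': "int i * int (m choose i) = int m * int ((m - 1) choose (i - 1))"
    using key by (metis of_nat_mult)
  have nm: "int n = int m + int i" using assms by (simp add: m_def)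
  have "(int n - 3 * int i) * int (m choose i)
        = int m * (int (m choose i) - 2 * int ((m-1) choose (i-1)))"
    using key' nm by (simp add: algebra_simps)
  hence "D3_coeff n i = (int m * (int (m choose i) - 2 * int ((m-1) choose (i-1)))) div int m"
    by (simp add: D3_coeff_def m_def)
  also have "\<dots> = int (m choose i) - 2 * int ((m-1) choose (i-1))"
    using mi by simp
  finally show ?thesis using False by (simp add: cc_def m_def)
qed

lemma cc_support:
  assumes "n \<ge> 2" "2*i > n"
  shows "cc n i = 0"
proof -
  have i: "i \<ge> 2" using assms by auto
  have "(n - i) choose i = 0" using assms by (intro binomial_eq_0) auto
  moreover have "(n - i - 1) choose (i - 1) = 0" using assms i by (intro binomial_eq_0) auto
  ultimately show ?thesis using i assms by (simp add: cc_def binomial_eq_0)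
qed

lemma pascal': "m \<ge> 1 \<Longrightarrow> (m choose Suc k) = ((m - 1) choose k) + ((m-1) choose Suc k)"
  by (cases m) auto

lemma cc_rec:
  assumes "n \<ge> 2"
  shows "cc (n+2) (Suc i) = cc (n+1) (Suc i) + cc n i"
proof (cases i)
  case 0
  then show ?thesis using assms by (simp add: cc_def)
next
  case (Suc j)
  have A: "int ((n - j) choose (j+2)) = int ((n-j-1) choose (j+2)) + int ((n-j-1) choose (j+1))"
  proof (cases "j < n")
    case True
    then show ?thesis using pascal'[of "n-j" "j+1"] by simp
  next
    case False
    then show ?thesis by simp
  qed
  have B: "int ((n - j - 1) choose (j+1)) = int ((n-j-2) choose (j+1)) + int ((n-j-2) choose j)"
  proof (cases "j + 1 < n")
    case True
    then show ?thesis using pascal'[of "n-j-1" "j"] by (simp add: diff_diff_add)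
  next
    case False
    then have "j \<ge> 1" using assms by auto
    then show ?thesis using False by simp
  qed
  show ?thesis using A B Suc by (simp add: cc_def diff_diff_add algebra_simps numeral_2_eq_2)
qed

lemma G_rec:
  assumes "n \<ge> 2"
  shows "G (n+2) y = G (n+1) y + y * G n y"
proof -
  have z1: "cc (n+1) (Suc (n+1)) = 0" using assms by (intro cc_support) auto
  have z2: "cc n (Suc n) = 0" using assms by (intro cc_support) auto
  have "G (n+2) y = cc (n+2) 0 + (\<Sum>i\<le>n+1. cc (n+2) (Suc i) * y^Suc i)"
    unfolding G_def by (simp add: sum.atMost_Suc_shift del: sum.atMost_Suc)
  also have "\<dots> = cc (n+1) 0 + (\<Sum>i\<le>n+1. cc (n+1) (Suc i) * y^Suc i)
                   + (\<Sum>i\<le>n+1. cc n i * y^Suc i)"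
    unfolding cc_rec[OF assms] distrib_right sum.distrib by (simp add: cc_def)
  also have "(\<Sum>i\<le>n+1. cc (n+1) (Suc i) * y^Suc i) = (\<Sum>i\<le>n. cc (n+1) (Suc i) * y^Suc i)"
    using z1 by simp
  also have "(\<Sum>i\<le>n+1. cc n i * y^Suc i) = (\<Sum>i\<le>n. cc n i * y^Suc i)"
    using z2 by simp
  also have "cc (n+1) 0 + (\<Sum>i\<le>n. cc (n+1) (Suc i) * y^Suc i) = G (n+1) y"
    unfolding G_def by (simp add: sum.atMost_Suc_shift del: sum.atMost_Suc)
  also have "(\<Sum>i\<le>n. cc n i * y^Suc i) = y * G n y"
    unfolding G_def by (simp add: sum_distrib_left algebra_simps)
  finally show ?thesis .
qed

lemma G_0: "G n 0 = 1"
  unfolding G_def by (cases n) (simp_all add: sum.atMost_Suc_shift cc_def del: sum.atMost_Suc)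

lemma G_2_3:
  "G 2 y = 1 - y" "G 3 y = 1"
  by (simp_all add: G_def cc_def eval_nat_numeral)

lemma G_m2: "n \<ge> 2 \<Longrightarrow> G n 2 = (-1)^(n+1) \<and> G (Suc n) 2 = (-1)^(n+2)"
proof (induction n rule: dec_induct)
  case base
  then show ?case using G_2_3 by (simp add: eval_nat_numeral)
next
  case (step n)
  have "G (Suc (Suc n)) 2 = G (Suc n) 2 + 2 * G n 2"
    using G_rec[OF step(1), of 2] by simp
  then show ?case using step by simp
qed

definition h :: "nat \<Rightarrow> int" where
  "h k = (if k = 0 then -1 else if k = 1 then 1 else if k = 2 then 2 else if k = 3 then 1
          else if k = 4 then -1 else -2)"

lemma h_rec: "h (Suc (Suc n) mod 6) = h (Suc n mod 6) - h (n mod 6)"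
proof -
  have "n mod 6 < 6" by simp
  then consider "n mod 6 = 0" | "n mod 6 = 1" | "n mod 6 = 2" | "n mod 6 = 3" | "n mod 6 = 4"
    | "n mod 6 = 5" by linarith
  then show ?thesis by cases (simp_all add: h_def mod_Suc)
qed

lemma G_1: "n \<ge> 2 \<Longrightarrow> G n (-1) = h (n mod 6) \<and> G (Suc n) (-1) = h (Suc n mod 6)"
proof (induction n rule: dec_induct)
  case base
  then show ?case using G_2_3 by (simp add: h_def)
next
  case (step n)
  have "G (Suc (Suc n)) (-1) = G (Suc n) (-1) - G n (-1)"
    using G_rec[OF step(1), of "-1"] by simp
  then show ?case using step h_rec by simp
qed

lemma poly_D3:
  assumes "n \<ge> 2"
  shows "poly (D3 n (1::'a::comm_ring_1)) (of_int x) = of_int (G n (-x))"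
proof -
  have "poly (D3 n (1::'a)) (of_int x)
      = (\<Sum>i\<in>{0..n div 2}. of_int (D3_coeff n i) * (-1)^i * (of_int x)^i)"
    using assms by (simp add: D3_def poly_sum poly_monom)
  also have "\<dots> = (\<Sum>i\<in>{0..n div 2}. of_int (cc n i * (-x)^i))"
    using assms by (intro sum.cong) (auto simp: coeff_eq power_minus[of "of_int x"] mult.assoc)
  also have "\<dots> = of_int (\<Sum>i\<in>{0..n div 2}. cc n i * (-x)^i)"
    by simp
  also have "(\<Sum>i\<in>{0..n div 2}. cc n i * (-x)^i) = G n (-x)"
    unfolding G_def
    by (rule sum.mono_neutral_left) (use assms cc_support in auto)
  finally show ?thesis .
qed

lemma poly_D3_1: "poly (D3 1 (1::'a::comm_ring_1)) x = 1"
  by (simp add: D3_def D3_coeff_def poly_monom)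

theorem theorem3p1:
  fixes p e n :: nat
  assumes "prime p" and "p > 3" and "e \<ge> 1"
    and "card (UNIV :: 'a set) = p ^ e"
    and "n \<ge> 1"
    and "permutation_poly (D3 n (1::'a::{finite,field}))"
  shows "n mod 6 = 2"
proof (rule ccontr)
  assume nm: "n mod 6 \<noteq> 2"
  have inj: "inj (poly (D3 n (1::'a)))" using assms(6) unfolding permutation_poly_def bij_def by blast
  have cpos: "CHAR('a) > 0" by (rule finite_imp_CHAR_pos) simp
  have cpr: "prime CHAR('a)" using prime_CHAR_semidom[OF cpos] .
  have "CHAR('a) dvd p ^ e" using CHAR_dvd_CARD[where 'a='a] assms(4) by simp
  hence "CHAR('a) dvd p" using cpr prime_dvd_power by blast
  hence cp: "CHAR('a) = p" using cpr assms(1) primes_dvd_imp_eq by blast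
  have d2: "\<not> p dvd 2" using assms(2) by (auto dest: dvd_imp_le)
  have d3: "\<not> p dvd 3" using assms(2) by (auto dest: dvd_imp_le)
  have n2: "of_nat 2 \<noteq> (0::'a)" using d2 cp of_nat_eq_0_iff_char_dvd by metis
  have n3: "of_nat 3 \<noteq> (0::'a)" using d3 cp of_nat_eq_0_iff_char_dvd by metis
  show False
  proof (cases "n = 1")
    case True
    have "poly (D3 n (1::'a)) 0 = poly (D3 n 1) 1" unfolding True poly_D3_1 by simp
    hence "(0::'a) = 1" by (rule injD[OF inj])
    then show False by simp
  next
    case False
    hence n: "n \<ge> 2" using assms(5) by linarith
    have P: "poly (D3 n (1::'a)) (of_int x) = of_int (G n (-x))" for x
      using poly_D3[OF n] .
    show False
    proof (cases "odd n")
      case True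
      have "G n 2 = 1" using G_m2[OF n] True by simp
      hence "poly (D3 n (1::'a)) (of_int (-2)) = poly (D3 n 1) (of_int 0)"
        using P[of "-2"] P[of 0] G_0 by simp
      hence "(of_int (-2) :: 'a) = of_int 0" by (rule injD[OF inj])
      hence "(of_nat 2 :: 'a) = 0" by simp
      then show False using n2 by blast
    next
      case False
      have m: "n mod 6 = 0 \<or> n mod 6 = 4" using False nm by presburger
      have "G n 2 = -1" using G_m2[OF n] False by simp
      moreover have "G n (-1) = -1" using conjunct1[OF G_1[OF n]] m unfolding h_def by auto
      ultimately have "poly (D3 n (1::'a)) (of_int (-2)) = poly (D3 n 1) (of_int 1)"
        using P[of "-2"] P[of 1] by simp
      hence "(of_int (-2) :: 'a) = of_int 1" by (rule injD[OF inj])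
      hence "(of_int 3 :: 'a) = 0" by (simp add: algebra_simps)
      hence "(of_nat 3 :: 'a) = 0" by simp
      then show False using n3 by blast
    qed
  qed
qed

end
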